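(* Fix $\alpha\in(0,1)$. Let $I=[a,b]\subset\mathbb{R}$ be a bounded closed interval and let $f^*\in C(I,\mathbb{R})$ be monotone. Then for every $\varepsilon>0$ there exist $L\in\mathbb{N}$ and a leaky-ReLU network $f_L\in\mathcal{N}_1(L)$ of width one such that $|f_L(x)-f^*(x)|\le\varepsilon$ for all $x\in I$.
   Context: Leaky-ReLU: $\sigma_\alpha(x)=\max(\alpha x,x)$. The class $\mathcal{N}_1(L)$ consists of all functions $f_L:\mathbb{R}\to\mathbb{R}$ given by $f_0(x)=w_0x+b_0$, $f_k(x)=w_k\sigma_\alpha(f_{k-1}(x))+b_k$, $k=1,\dots,L$, with arbitrary $w_k,b_k\in\mathbb{R}$. *)

theory Defs
  imports "HOL-Analysis.Analysis"
begin

definition leaky_relu :: "real \<Rightarrow> real \<Rightarrow> real" where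
  "leaky_relu \<alpha> x = max (\<alpha> * x) x"

fun net :: "real \<Rightarrow> (nat \<Rightarrow> real) \<Rightarrow> (nat \<Rightarrow> real) \<Rightarrow> nat \<Rightarrow> real \<Rightarrow> real" where
  "net \<alpha> w b 0 x = w 0 * x + b 0"
| "net \<alpha> w b (Suc k) x = w (Suc k) * leaky_relu \<alpha> (net \<alpha> w b k x) + b (Suc k)"

definition N1 :: "real \<Rightarrow> nat \<Rightarrow> (real \<Rightarrow> real) set" where
  "N1 \<alpha> L = {f. \<exists>w b. f = net \<alpha> w b L}"

end

theory Submission
  imports Defs
begin

lemma net_cong:
  assumes "\<And>i. i \<le> k \<Longrightarrow> w i = w' i \<and> b i = b' i"
  shows "net \<alpha> w b k x = net \<alpha> w' b' k x"
  using assms by (induction k) (auto simp: le_Suc_eq)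

lemma N1_affine:
  assumes "f \<in> N1 \<alpha> L"
  shows "(\<lambda>x. c * f x + d) \<in> N1 \<alpha> L"
proof -
  obtain w b where f: "f = net \<alpha> w b L" using assms unfolding N1_def by blast
  define w' where "w' = w(L := c * w L)"
  define b' where "b' = b(L := c * b L + d)"
  have "(\<lambda>x. c * f x + d) = net \<alpha> w' b' L"
  proof (cases L)
    case 0 then show ?thesis by (auto simp: f w'_def b'_def algebra_simps)
  next
    case (Suc k)
    have e: "net \<alpha> w' b' k x = net \<alpha> w b k x" for x
      by (rule net_cong) (auto simp: w'_def b'_def Suc)
    show ?thesis
      by (rule ext) (simp add: f Suc e, simp add: w'_def b'_def Suc algebra_simps)
  qed
  then show ?thesis unfolding N1_def by blast
qed

lemma N1_relu:
  assumes "f \<in> N1 \<alpha> L"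
  shows "(\<lambda>x. c * leaky_relu \<alpha> (f x) + d) \<in> N1 \<alpha> (Suc L)"
proof -
  obtain w b where f: "f = net \<alpha> w b L" using assms unfolding N1_def by blast
  define w' where "w' = w(Suc L := c)"
  define b' where "b' = b(Suc L := d)"
  have e: "net \<alpha> w' b' L x = net \<alpha> w b L x" for x
    by (rule net_cong) (auto simp: w'_def b'_def)
  have "(\<lambda>x. c * leaky_relu \<alpha> (f x) + d) = net \<alpha> w' b' (Suc L)"
    by (rule ext) (simp add: f e, simp add: w'_def b'_def)
  then show ?thesis unfolding N1_def by blast
qed

definition AA :: "real \<Rightarrow> (real \<Rightarrow> real) set" where
  "AA \<alpha> = (\<Union>L. N1 \<alpha> L)"

definition cmp :: "real \<Rightarrow> real \<Rightarrow> real \<Rightarrow> real" where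
  "cmp \<rho> c y = (if y \<le> c then y else c + \<rho> * (y - c))"

lemma AA_affine: "f \<in> AA \<alpha> \<Longrightarrow> (\<lambda>x. c * f x + d) \<in> AA \<alpha>"
  unfolding AA_def using N1_affine by blast

lemma cmp_alpha:
  assumes "0 < \<alpha>" "\<alpha> < 1" "f \<in> AA \<alpha>"
  shows "(\<lambda>x. cmp \<alpha> c (f x)) \<in> AA \<alpha>"
proof -
  obtain L where L: "f \<in> N1 \<alpha> L" using assms(3) unfolding AA_def by blast
  have "(\<lambda>x. (-1) * leaky_relu \<alpha> ((-1) * f x + c) + c) \<in> N1 \<alpha> (Suc L)"
    by (rule N1_relu, rule N1_affine, rule L)
  moreover have "(\<lambda>x. (-1) * leaky_relu \<alpha> ((-1) * f x + c) + c) = (\<lambda>x. cmp \<alpha> c (f x))"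
  proof (rule ext)
    fix x
    show "(-1) * leaky_relu \<alpha> ((-1) * f x + c) + c = cmp \<alpha> c (f x)"
    proof (cases "f x \<le> c")
      case True
      have "0 \<le> (1 - \<alpha>) * (c - f x)" using True assms by simp
      hence "\<alpha> * (c - f x) \<le> c - f x" by (simp add: algebra_simps)
      then show ?thesis using True by (simp add: leaky_relu_def cmp_def max_def)
    next
      case False
      have "0 \<le> (1 - \<alpha>) * (f x - c)" using False assms by simp
      hence "\<alpha> * (c - f x) \<ge> c - f x" by (simp add: algebra_simps)
      then show ?thesis using False by (auto simp: leaky_relu_def cmp_def max_def algebra_simps)
    qed
  qed
  ultimately show ?thesis unfolding AA_def by auto
qed

lemma cmp_ialpha:
  assumes "0 < \<alpha>" "\<alpha> < 1" "f \<in> AA \<alpha>"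
  shows "(\<lambda>x. cmp (1/\<alpha>) c (f x)) \<in> AA \<alpha>"
proof -
  obtain L where L: "f \<in> N1 \<alpha> L" using assms(3) unfolding AA_def by blast
  have "(\<lambda>x. (1/\<alpha>) * leaky_relu \<alpha> (1 * f x + (-c)) + c) \<in> N1 \<alpha> (Suc L)"
    by (rule N1_relu, rule N1_affine, rule L)
  moreover have "(\<lambda>x. (1/\<alpha>) * leaky_relu \<alpha> (1 * f x + (-c)) + c) = (\<lambda>x. cmp (1/\<alpha>) c (f x))"
  proof (rule ext)
    fix x
    show "(1/\<alpha>) * leaky_relu \<alpha> (1 * f x + (-c)) + c = cmp (1/\<alpha>) c (f x)"
    proof (cases "f x \<le> c")
      case True
      have "0 \<le> (1 - \<alpha>) * (c - f x)" using True assms by simp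
      hence "\<alpha> * (f x - c) \<ge> f x - c" by (simp add: algebra_simps)
      then show ?thesis using True assms by (simp add: leaky_relu_def cmp_def max_def)
    next
      case False
      have "0 \<le> (1 - \<alpha>) * (f x - c)" using False assms by simp
      hence "\<alpha> * (f x - c) \<le> f x - c" by (simp add: algebra_simps)
      then show ?thesis using False by (auto simp: leaky_relu_def cmp_def max_def algebra_simps)
    qed
  qed
  ultimately show ?thesis unfolding AA_def by auto
qed

lemma cmp_mult:
  assumes "\<rho> > 0" "\<sigma> > 0"
  shows "cmp \<rho> c (cmp \<sigma> c y) = cmp (\<rho> * \<sigma>) c y"
  using assms by (auto simp: cmp_def algebra_simps)

lemma cmp_one[simp]: "cmp 1 c y = y" by (simp add: cmp_def)

lemma cmp_pow:
  assumes "0 < \<alpha>" "\<alpha> < 1" "f \<in> AA \<alpha>"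
  shows "(\<lambda>x. cmp (\<alpha>^n) c (f x)) \<in> AA \<alpha>" "(\<lambda>x. cmp ((1/\<alpha>)^n) c (f x)) \<in> AA \<alpha>"
proof -
  show "(\<lambda>x. cmp (\<alpha>^n) c (f x)) \<in> AA \<alpha>"
  proof (induction n)
    case 0 then show ?case using assms by simp
  next
    case (Suc n)
    have "(\<lambda>x. cmp \<alpha> c (cmp (\<alpha>^n) c (f x))) \<in> AA \<alpha>"
      using cmp_alpha[OF assms(1,2) Suc] .
    then show ?case using assms by (simp add: cmp_mult)
  qed
  show "(\<lambda>x. cmp ((1/\<alpha>)^n) c (f x)) \<in> AA \<alpha>"
  proof (induction n)
    case 0 then show ?case using assms by simp
  next
    case (Suc n)
    have "(\<lambda>x. cmp (1/\<alpha>) c (cmp ((1/\<alpha>)^n) c (f x))) \<in> AA \<alpha>"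
      using cmp_ialpha[OF assms(1,2) Suc] .
    then show ?case using assms by (simp add: cmp_mult)
  qed
qed

lemma cmp_strict: "\<rho> > 0 \<Longrightarrow> y < z \<Longrightarrow> cmp \<rho> c y < cmp \<rho> c z"
proof -
  assume r: "\<rho> > 0" and yz: "y < z"
  have a: "\<rho> * (z - c) > 0" if "z > c" using r that by simp
  have b: "\<rho> * (y - c) < \<rho> * (z - c)" using r yz by simp
  show ?thesis unfolding cmp_def using a b yz by auto
qed

lemma strict_mono_cmp: "\<rho> > 0 \<Longrightarrow> strict_mono g \<Longrightarrow> strict_mono (\<lambda>x. cmp \<rho> c (g x))"
  unfolding strict_mono_def using cmp_strict by blast


lemma hit:
  assumes al: "0 < \<alpha>" "\<alpha> < 1" and g: "g \<in> AA \<alpha>" "strict_mono g"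
    and ts: "t < s" and T: "g t < T"
  shows "\<exists>h \<in> AA \<alpha>. strict_mono h \<and> (\<forall>z \<le> t. h z = g z) \<and> h s = T"
proof -
  define c where "c = g t"
  define G0 where "G0 = g s"
  have G0c: "G0 > c" using g(2) ts unfolding c_def G0_def strict_mono_def by blast
  have ia: "1 < 1/\<alpha>" using al by simp
  obtain N1 where N1: "(T - c) / (G0 - c) < (1/\<alpha>)^N1" using real_arch_pow[OF ia] by blast
  define E where "E = (1/\<alpha>)^N1"
  have Epos: "E > 0" using al unfolding E_def by simp
  define g1 where "g1 = (\<lambda>x. cmp E c (g x))"
  have g1A: "g1 \<in> AA \<alpha>" unfolding g1_def E_def using cmp_pow(2)[OF al g(1)] .
  have g1m: "strict_mono g1" unfolding g1_def using strict_mono_cmp[OF Epos g(2)] .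
  define G1 where "G1 = g1 s"
  have G1: "G1 = c + E * (G0 - c)" using G0c unfolding G1_def g1_def cmp_def G0_def by simp
  have "T - c < E * (G0 - c)" using N1 G0c unfolding E_def by (simp add: divide_less_eq)
  hence TG1: "T < G1" using G1 by simp
  have Tc: "T - c > 0" using T c_def by simp
  have G1c: "G1 - c > 0" using TG1 Tc by simp
  obtain N2 where N2: "\<alpha>^N2 < (T - c) / (G1 - c)"
    using real_arch_pow_inv[of "(T - c) / (G1 - c)" \<alpha>] Tc G1c al by auto
  define \<rho> where "\<rho> = \<alpha>^Suc N2"
  have rpos: "\<rho> > 0" using al unfolding \<rho>_def by simp
  have "\<rho> \<le> \<alpha>^N2" unfolding \<rho>_def using al by (simp add: mult_left_le_one_le)
  hence r1: "\<rho> * (G1 - c) < T - c" using N2 G1c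
    by (smt (verit) mult_right_mono pos_less_divide_eq)
  have rl1: "\<rho> < 1" unfolding \<rho>_def proof -
    have "\<alpha> * \<alpha>^N2 \<le> \<alpha> * 1" using al power_le_one[of \<alpha> N2] by (intro mult_left_mono) auto
    then show "\<alpha>^Suc N2 < 1" using al by (simp only: power_Suc)
  qed
  define c' where "c' = (T - \<rho> * G1) / (1 - \<rho>)"
  have cc': "c \<le> c'" unfolding c'_def using rl1 r1 by (simp add: le_divide_eq algebra_simps)
  have c'G1: "c' < G1" unfolding c'_def using rl1 TG1 rpos
    by (simp add: divide_less_eq algebra_simps)
  define h where "h = (\<lambda>x. cmp \<rho> c' (g1 x))"
  have hA: "h \<in> AA \<alpha>"
  proof -
    have "(\<lambda>x. cmp (\<alpha>^Suc N2) c' (g1 x)) \<in> AA \<alpha>" using cmp_pow(1)[OF al g1A] .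
    then show ?thesis unfolding h_def \<rho>_def .
  qed
  have hm: "strict_mono h" unfolding h_def using strict_mono_cmp[OF rpos g1m] .
  have hs: "h s = T"
  proof -
    have "h s = c' + \<rho> * (G1 - c')" unfolding h_def using c'G1 G1_def by (simp add: cmp_def)
    also have "\<dots> = c' * (1 - \<rho>) + \<rho> * G1" by (simp add: algebra_simps)
    also have "c' * (1 - \<rho>) = T - \<rho> * G1" unfolding c'_def using rl1 by simp
    also have "T - \<rho> * G1 + \<rho> * G1 = T" by simp
    finally show ?thesis .
  qed
  have hz: "h z = g z" if "z \<le> t" for z
  proof -
    have "g z \<le> c" unfolding c_def using g(2) that
      by (metis order_le_less strict_mono_less)
    hence "g1 z = g z" unfolding g1_def cmp_def by simp
    then show ?thesis unfolding h_def cmp_def using \<open>g z \<le> c\<close> cc' by simp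
  qed
  show ?thesis using hA hm hs hz by blast
qed


lemma construct:
  assumes al: "0 < \<alpha>" "\<alpha> < 1"
    and xm: "\<And>i j. i \<le> j \<Longrightarrow> x i \<le> (x j :: real)"
    and st: "\<And>j. j < n \<Longrightarrow> x j < x (Suc j) \<and> T j < T (Suc j)"
  shows "k \<le> n \<Longrightarrow> \<exists>g \<in> AA \<alpha>. strict_mono g \<and> (\<forall>j\<le>k. g (x j) = T j)"
proof (induction k)
  case 0
  have "(\<lambda>z. 1 * z + (T 0 - x 0)) \<in> N1 \<alpha> 0"
    unfolding N1_def by (rule CollectI, rule exI[of _ "\<lambda>_. 1"], rule exI[of _ "\<lambda>_. T 0 - x 0"]) auto
  hence "(\<lambda>z. 1 * z + (T 0 - x 0)) \<in> AA \<alpha>" unfolding AA_def by blast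
  moreover have "strict_mono (\<lambda>z::real. 1 * z + (T 0 - x 0))" by (simp add: strict_mono_def)
  ultimately show ?case by auto
next
  case (Suc k)
  then obtain g where g: "g \<in> AA \<alpha>" "strict_mono g" "\<forall>j\<le>k. g (x j) = T j" by auto
  have kn: "k < n" using Suc by simp
  have "g (x k) < T (Suc k)" using g(3) st[OF kn] by simp
  then obtain h where h: "h \<in> AA \<alpha>" "strict_mono h" "\<forall>z \<le> x k. h z = g z" "h (x (Suc k)) = T (Suc k)"
    using hit[OF al g(1,2), of "x k" "x (Suc k)"] st[OF kn] by blast
  have "\<forall>j\<le>Suc k. h (x j) = T j"
  proof (intro allI impI)
    fix j assume "j \<le> Suc k"
    then consider "j \<le> k" | "j = Suc k" by linarith
    then show "h (x j) = T j"
    proof cases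
      case 1 then show ?thesis using h(3) g(3) xm[OF 1] by simp
    next
      case 2 then show ?thesis using h(4) by simp
    qed
  qed
  then show ?case using h(1,2) by blast
qed

lemma inc_case:
  assumes al: "0 < \<alpha>" "\<alpha> < 1" and ab: "a < b" and cf: "continuous_on {a..b} f"
    and mf: "mono_on {a..b} f" and ep: "\<epsilon> > 0"
  shows "\<exists>L::nat. \<exists>g \<in> N1 \<alpha> L. \<forall>y \<in> {a..b}. \<bar>g y - f y\<bar> \<le> \<epsilon>"
proof -
  have "uniformly_continuous_on {a..b} f"
    using compact_uniformly_continuous[OF cf] by simp
  then obtain d where d: "d > 0"
    and dH: "\<And>y y'. y \<in> {a..b} \<Longrightarrow> y' \<in> {a..b} \<Longrightarrow> dist y' y < d \<Longrightarrow> dist (f y') (f y) < \<epsilon>/2"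
    unfolding uniformly_continuous_on_def using ep by (meson half_gt_zero)
  obtain n :: nat where n: "(b - a) / d < real n" using reals_Archimedean2 by blast
  have npos: "real n > 0" using n ab d by (smt (verit) divide_pos_pos)
  define hh where "hh = (b - a) / real n"
  have hpos: "hh > 0" unfolding hh_def using ab npos by simp
  have hd: "hh < d" unfolding hh_def using n npos d by (simp add: divide_less_eq mult.commute)
  define x where "x = (\<lambda>i::nat. a + real i * hh)"
  define \<delta> where "\<delta> = \<epsilon> / (2 * real n)"
  have dpos: "\<delta> > 0" unfolding \<delta>_def using ep npos by simp
  define T where "T = (\<lambda>i. f (x i) + real i * \<delta>)"
  have xn: "x n = b" unfolding x_def hh_def using npos by simp
  have xm: "\<And>i j. i \<le> j \<Longrightarrow> x i \<le> x j" unfolding x_def using hpos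
    by (simp add: mult_right_mono)
  have xin: "x i \<in> {a..b}" if "i \<le> n" for i
    using xm[OF that] xm[of 0 i] xn by (simp add: x_def)
  have st: "x j < x (Suc j) \<and> T j < T (Suc j)" if "j < n" for j
  proof -
    have "x j < x (Suc j)" unfolding x_def using hpos by (simp add: algebra_simps)
    moreover have "f (x j) \<le> f (x (Suc j))"
      using mono_onD[OF mf xin xin] that \<open>x j < x (Suc j)\<close> by simp
    ultimately show ?thesis unfolding T_def using dpos by (simp add: algebra_simps)
  qed
  obtain g where g: "g \<in> AA \<alpha>" "strict_mono g" "\<forall>j\<le>n. g (x j) = T j"
    using construct[where x=x and n=n and T=T and k=n, OF al xm st] by auto
  have claim: "k \<le> n \<longrightarrow> (\<forall>y \<in> {a..x k}. \<bar>g y - f y\<bar> \<le> \<epsilon>)" for k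
  proof (induction k)
    case 0
    have "g (x 0) = T 0" using g(3) by simp
    then show ?case using ep by (simp add: x_def T_def)
  next
    case (Suc k)
    show ?case
    proof (intro impI ballI)
      assume kn: "Suc k \<le> n"
      fix y assume y: "y \<in> {a..x (Suc k)}"
      show "\<bar>g y - f y\<bar> \<le> \<epsilon>"
      proof (cases "y \<le> x k")
        case True then show ?thesis using Suc kn y by auto
      next
        case False
        have ya: "y \<in> {a..b}" using y xin[OF kn] by auto
        have gl: "g (x k) \<le> g y" using g(2) False by (simp add: strict_mono_less_eq)
        have gu: "g y \<le> g (x (Suc k))" using g(2) y by (simp add: strict_mono_less_eq)
        have fl: "f (x k) \<le> f y" using mono_onD[OF mf xin ya] kn False by simp
        have fu: "f y \<le> f (x (Suc k))" using mono_onD[OF mf ya xin] kn y by simp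
        have dist: "dist (x (Suc k)) (x k) < d" unfolding x_def dist_real_def
          using hd hpos by (simp add: algebra_simps)
        have osc: "f (x (Suc k)) - f (x k) < \<epsilon>/2"
        proof -
          have k1: "k \<le> n" using kn by simp
          have "dist (f (x (Suc k))) (f (x k)) < \<epsilon>/2" using dH[OF xin[OF k1] xin[OF kn] dist] .
          then have "\<bar>f (x (Suc k)) - f (x k)\<bar> < \<epsilon>/2" by (simp only: dist_real_def)
          then show ?thesis using abs_ge_self[of "f (x (Suc k)) - f (x k)"] by linarith
        qed
        have Tk: "g (x k) = f (x k) + real k * \<delta>" using g(3) kn by (simp add: T_def)
        have TSk: "g (x (Suc k)) = f (x (Suc k)) + real (Suc k) * \<delta>" using g(3) kn by (simp add: T_def)
        have "real (Suc k) * \<delta> \<le> real n * \<delta>" using kn dpos by (simp add: mult_right_mono)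
        also have "real n * \<delta> = \<epsilon>/2" unfolding \<delta>_def using npos by simp
        finally have b1: "real (Suc k) * \<delta> \<le> \<epsilon>/2" .
        have b2: "real k * \<delta> \<ge> 0" using dpos by simp
        show ?thesis using gl gu fl fu osc Tk TSk b1 b2 by linarith
      qed
    qed
  qed
  obtain L where L: "g \<in> N1 \<alpha> L" using g(1) unfolding AA_def by blast
  show ?thesis using claim[of n] xn L by auto
qed

theorem mainTheorem2:
  fixes \<alpha> a b \<epsilon> :: real and fstar :: "real \<Rightarrow> real"
  assumes "0 < \<alpha>" "\<alpha> < 1" "a \<le> b"
    and "continuous_on {a..b} fstar"
    and "mono_on {a..b} fstar \<or> antimono_on {a..b} fstar"
    and "\<epsilon> > 0"
  shows "\<exists>L::nat. \<exists>f \<in> N1 \<alpha> L. \<forall>x \<in> {a..b}. \<bar>f x - fstar x\<bar> \<le> \<epsilon>"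
proof (cases "a = b")
  case True
  have "(\<lambda>x. 0 * x + fstar a) \<in> N1 \<alpha> 0"
    unfolding N1_def by (rule CollectI, rule exI[of _ "\<lambda>_. 0"], rule exI[of _ "\<lambda>_. fstar a"]) auto
  then show ?thesis using True assms(6) by (intro exI[of _ 0] bexI[of _ "\<lambda>x. 0 * x + fstar a"]) auto
next
  case False
  hence ab: "a < b" using assms(3) by simp
  from assms(5) show ?thesis
  proof
    assume "mono_on {a..b} fstar"
    then show ?thesis using inc_case[OF assms(1,2) ab assms(4) _ assms(6)] by blast
  next
    assume am: "antimono_on {a..b} fstar"
    have m: "mono_on {a..b} (\<lambda>x. - fstar x)"
      using am unfolding monotone_on_def by auto
    have c: "continuous_on {a..b} (\<lambda>x. - fstar x)" using assms(4) by (intro continuous_intros)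
    obtain L g where g: "g \<in> N1 \<alpha> L" "\<forall>y\<in>{a..b}. \<bar>g y - (- fstar y)\<bar> \<le> \<epsilon>"
      using inc_case[OF assms(1,2) ab c m assms(6)] by blast
    have "(\<lambda>x. (-1) * g x + 0) \<in> N1 \<alpha> L" by (rule N1_affine[OF g(1)])
    moreover have "\<forall>y\<in>{a..b}. \<bar>(-1) * g y + 0 - fstar y\<bar> \<le> \<epsilon>" using g(2) by (auto simp: abs_minus_commute)
    ultimately show ?thesis by (intro exI[of _ L] bexI[of _ "\<lambda>x. (-1) * g x + 0"]) auto
  qed
qed

end
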